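(* Let $m$ be a positive integer. For every integer $n$ with $\frac{3^{m-1}+1}{2}\le n\le \frac{3^{m-1}+1}{2}+3^{m-2}$, $$t(n)=\sum_{R=\lceil \frac{n-1}{3}\rceil}^{\lfloor\frac{2n+3^{m-2}-1}{4}\rfloor} t(R)\;-\;\sum_{R=\lceil\frac{3n+2}{5}\rceil}^{\lfloor\frac{2n+3^{m-2}-1}{4}\rfloor}\ \sum_{S=\lceil\frac{R-1}{3}\rceil}^{2R-n-1} t(S),$$ and for every integer $n$ with $\frac{3^{m-1}+1}{2}+3^{m-2}+1\le n\le\frac{3^m-1}{2}$, $$t(n)=\sum_{R=\lceil\frac{n-1}{3}\rceil}^{\frac{3^{m-1}-1}{2}} t(R).$$ (Empty sums are $0$.)
   Context: A weighing partition of a positive integer $n$ is a multiset of positive integers summing to $n$ such that every integer $\ell$ with $1\le\ell\le n$ can be written as $\sum_j u_jw_j$ with $u_j\in\{-1,0,1\}$ (weighing on a two-pan balance with weights on both pans). A feasible partition of $n$ is a weighing partition of $n$ whose number of parts is minimal among all weighing partitions of $n$. For a positive integer $n$, $t(n)$ denotes the number of feasible partitions of $n$ (as multisets), and by convention $t(0)=1$. *)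

theory Defs
  imports Complex_Main "HOL-Library.Multiset"
begin

definition weighing_partition :: "nat \<Rightarrow> nat multiset \<Rightarrow> bool" where
  "weighing_partition n M \<longleftrightarrow>
     (\<forall>x\<in>#M. 0 < x) \<and> sum_mset M = n \<and>
     (\<exists>ws. mset ws = M \<and>
        (\<forall>l\<in>{1..n}. \<exists>u::int list. length u = length ws \<and> set u \<subseteq> {-1, 0, 1} \<and>
              int l = (\<Sum>j<length ws. u ! j * int (ws ! j))))"

definition feasible_partition :: "nat \<Rightarrow> nat multiset \<Rightarrow> bool" where
  "feasible_partition n M \<longleftrightarrow> weighing_partition n M \<and>
     (\<forall>M'. weighing_partition n M' \<longrightarrow> size M \<le> size M')"

definition t :: "nat \<Rightarrow> nat" where
  "t n = (if n = 0 then 1 else card {M. feasible_partition n M})"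

end

theory Submission
  imports Defs
begin


primrec reps :: "nat list \<Rightarrow> int set" where
  "reps [] = {0}"
| "reps (w # ws) = {x + e * int w | x e. x \<in> reps ws \<and> e \<in> {-1,0,1}}"

lemma reps_ConsI: "x \<in> reps ws \<Longrightarrow> e \<in> {-1,0,1} \<Longrightarrow> x + e * int w \<in> reps (w # ws)"
  by (simp only: reps.simps) blast

lemma rep_iff:
  "(\<exists>u::int list. length u = length ws \<and> set u \<subseteq> {-1, 0, 1} \<and>
      l = (\<Sum>j<length ws. u ! j * int (ws ! j))) \<longleftrightarrow> l \<in> reps ws"
proof (induction ws arbitrary: l)
  case Nil
  then show ?case by auto
next
  case (Cons w ws)
  show ?case
  proof
    assume "\<exists>u::int list. length u = length (w#ws) \<and> set u \<subseteq> {-1, 0, 1} \<and>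
      l = (\<Sum>j<length (w#ws). u ! j * int ((w#ws) ! j))"
    then obtain u where u: "length u = length (w#ws)" "set u \<subseteq> {-1, 0, 1}"
      "l = (\<Sum>j<length (w#ws). u ! j * int ((w#ws) ! j))" by blast
    obtain e u' where eu: "u = e # u'" using u(1) by (cases u) auto
    have "l = e * int w + (\<Sum>j<length ws. u' ! j * int (ws ! j))"
      using u(3) unfolding length_Cons sum.lessThan_Suc_shift by (simp add: eu)
    moreover have "(\<Sum>j<length ws. u' ! j * int (ws ! j)) \<in> reps ws"
      using Cons.IH u eu by auto
    moreover have "e \<in> {-1,0,1}" using u eu by auto
    ultimately show "l \<in> reps (w#ws)" using reps_ConsI by (metis add.commute)
  next
    assume "l \<in> reps (w#ws)"
    then obtain x e where xe: "l = x + e * int w" "x \<in> reps ws" "e \<in> {-1,0,1}" by auto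
    obtain u' where u': "length u' = length ws" "set u' \<subseteq> {-1, 0, 1}"
      "x = (\<Sum>j<length ws. u' ! j * int (ws ! j))" using Cons.IH xe(2) by blast
    show "\<exists>u::int list. length u = length (w#ws) \<and> set u \<subseteq> {-1, 0, 1} \<and>
      l = (\<Sum>j<length (w#ws). u ! j * int ((w#ws) ! j))"
      by (rule exI[of _ "e # u'"]) (use u' xe in \<open>auto simp only: length_Cons sum.lessThan_Suc_shift, auto\<close>)
  qed
qed

definition msum :: "int set \<Rightarrow> int set \<Rightarrow> int set" where
  "msum A B = {a + b | a b. a \<in> A \<and> b \<in> B}"

lemma reps_append: "reps (xs @ ys) = msum (reps xs) (reps ys)"
proof (induction xs)
  case Nil then show ?case by (auto simp: msum_def)
next
  case (Cons x xs)
  show ?case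
  proof (rule set_eqI, rule iffI)
    fix z assume "z \<in> reps ((x # xs) @ ys)"
    then obtain y e where ye: "z = y + e * int x" "y \<in> msum (reps xs) (reps ys)" "e \<in> {-1,0,1}"
      using Cons by auto
    then obtain a b where ab: "y = a + b" "a \<in> reps xs" "b \<in> reps ys" by (auto simp: msum_def)
    have "a + e * int x \<in> reps (x # xs)" using ab ye by auto
    moreover have "z = (a + e * int x) + b" using ye ab by simp
    ultimately show "z \<in> msum (reps (x # xs)) (reps ys)" using ab unfolding msum_def by blast
  next
    fix z assume "z \<in> msum (reps (x # xs)) (reps ys)"
    then obtain a b where ab: "z = a + b" "a \<in> reps (x#xs)" "b \<in> reps ys" by (auto simp: msum_def)
    then obtain c e where ce: "a = c + e * int x" "c \<in> reps xs" "e \<in> {-1,0,1}" by auto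
    have "c + b \<in> reps (xs @ ys)" using Cons ce ab unfolding msum_def by blast
    moreover have "z = (c + b) + e * int x" using ab ce by simp
    ultimately show "z \<in> reps ((x # xs) @ ys)" using ce by auto
  qed
qed

lemma reps_swap: "reps (a # b # r) = reps (b # a # r)"
proof -
  have "reps (a # b # r) = msum (reps [a,b]) (reps r)" using reps_append[of "[a,b]" r] by simp
  moreover have "reps (b # a # r) = msum (reps [b,a]) (reps r)" using reps_append[of "[b,a]" r] by simp
  moreover have "reps [a,b] = reps [b,a]"
  proof -
    have "\<And>a b. reps [a,b] \<subseteq> reps [b,a]"
    proof
      fix a b z assume "z \<in> reps [a,b]"
      then obtain e1 e2 where "z = e2 * int b + e1 * int a" "e1 \<in> {-1,0,1}" "e2 \<in> {-1,0,1}" by auto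
      moreover have "e1 * int a \<in> reps [a]" using \<open>e1 \<in> {-1,0,1}\<close> by force
      ultimately show "z \<in> reps [b,a]" using reps_ConsI[of "e1 * int a" "[a]" e2 b] by (simp add: add.commute)
    qed
    then show ?thesis by blast
  qed
  ultimately show ?thesis by simp
qed

lemma reps_move: "reps (xs @ x # ys) = reps (x # xs @ ys)"
proof (induction xs)
  case Nil then show ?case by simp
next
  case (Cons a xs)
  have "reps ((a # xs) @ x # ys) = reps (a # (xs @ x # ys))" by simp
  also have "\<dots> = reps (a # x # xs @ ys)" using Cons by simp
  also have "\<dots> = reps (x # a # xs @ ys)" by (rule reps_swap)
  finally show ?case by simp
qed

lemma reps_perm: "mset xs = mset ys \<Longrightarrow> reps xs = reps ys"
proof (induction xs arbitrary: ys)
  case Nil then show ?case by simp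
next
  case (Cons x xs)
  have "x \<in> set ys" using Cons.prems by (metis list.set_intros(1) set_mset_mset)
  then obtain ys1 ys2 where ys: "ys = ys1 @ x # ys2" by (meson split_list)
  have "mset xs = mset (ys1 @ ys2)" using Cons.prems ys by simp
  then have "reps xs = reps (ys1 @ ys2)" using Cons.IH by blast
  then show ?case using ys reps_move by simp
qed



declare of_nat_sum_mset[simp del]


definition repsM :: "nat multiset \<Rightarrow> int set" where
  "repsM M = reps (sorted_list_of_multiset M)"

lemma repsM_mset: "repsM (mset ws) = reps ws"
  unfolding repsM_def by (rule reps_perm) simp

lemma repsM_empty[simp]: "repsM {#} = {0}"
  by (simp add: repsM_def)

lemma repsM_add_mset: "repsM (add_mset w M) = {x + e * int w | x e. x \<in> repsM M \<and> e \<in> {-1,0,1}}"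
proof -
  obtain l where l: "mset l = M" using ex_mset by blast
  have "repsM (add_mset w M) = reps (w # l)" using repsM_mset[of "w # l"] l by simp
  then show ?thesis using repsM_mset[of l] l by simp
qed

lemma repsM_plus: "repsM (A + B) = msum (repsM A) (repsM B)"
proof -
  obtain la where la: "mset la = A" using ex_mset by blast
  obtain lb where lb: "mset lb = B" using ex_mset by blast
  have "repsM (A + B) = reps (la @ lb)" using repsM_mset[of "la @ lb"] la lb by simp
  then show ?thesis using reps_append repsM_mset la lb by metis
qed

lemma repsM_bound: "x \<in> repsM M \<Longrightarrow> \<bar>x\<bar> \<le> int (sum_mset M)"
proof (induction M arbitrary: x)
  case empty then show ?case by simp
next
  case (add w M)
  then obtain y e where ye: "x = y + e * int w" "y \<in> repsM M" "e \<in> {-1,0,1}"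
    by (auto simp: repsM_add_mset)
  have "\<bar>y\<bar> \<le> int (sum_mset M)" using add.IH ye by blast
  then show ?case using ye by auto
qed

definition Cm :: "nat multiset \<Rightarrow> bool" where
  "Cm M \<longleftrightarrow> (\<forall>x\<in>#M. x \<le> 2 * sum_mset (filter_mset (\<lambda>y. y < x) M) + 1)"

lemma sum_filter_le: "sum_mset (filter_mset P M) \<le> sum_mset (M::nat multiset)"
  by (metis le_add1 multiset_partition sum_mset.union)

lemma Cm_add:
  assumes "\<forall>y\<in>#M. y \<le> x"
  shows "Cm (add_mset x M) \<longleftrightarrow> Cm M \<and> x \<le> 2 * sum_mset M + 1"
proof -
  have f1: "filter_mset (\<lambda>y. y < z) (add_mset x M) = filter_mset (\<lambda>y. y < z) M" if "z \<in># M" for z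
  proof -
    have "\<not> x < z" using assms that by (meson not_le)
    then show ?thesis by simp
  qed
  have f2: "filter_mset (\<lambda>y. y < x) (add_mset x M) = filter_mset (\<lambda>y. y < x) M" by simp
  show ?thesis
  proof
    assume c: "Cm (add_mset x M)"
    have "Cm M" unfolding Cm_def
    proof
      fix z assume z: "z \<in># M"
      then show "z \<le> 2 * sum_mset (filter_mset (\<lambda>y. y < z) M) + 1"
        using c f1[OF z] unfolding Cm_def by auto
    qed
    moreover have "x \<le> 2 * sum_mset M + 1"
    proof -
      have "x \<le> 2 * sum_mset (filter_mset (\<lambda>y. y < x) (add_mset x M)) + 1"
        using c unfolding Cm_def by simp
      then show ?thesis using f2 sum_filter_le[of "\<lambda>y. y < x" M] by simp
    qed
    ultimately show "Cm M \<and> x \<le> 2 * sum_mset M + 1" by blast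
  next
    assume a: "Cm M \<and> x \<le> 2 * sum_mset M + 1"
    have cx: "x \<le> 2 * sum_mset (filter_mset (\<lambda>y. y < x) M) + 1"
    proof (cases "x \<in># M")
      case True then show ?thesis using a unfolding Cm_def by blast
    next
      case False
      have "\<forall>y\<in>#M. y < x" using assms False using le_neq_implies_less by blast
      then have "filter_mset (\<lambda>y. y < x) M = filter_mset (\<lambda>y. True) M" by (intro filter_mset_cong) auto
      then have "filter_mset (\<lambda>y. y < x) M = M" by simp
      then show ?thesis using a by simp
    qed
    show "Cm (add_mset x M)" unfolding Cm_def
    proof
      fix z assume "z \<in># add_mset x M"
      then consider "z = x" | "z \<in># M" by auto
      then show "z \<le> 2 * sum_mset (filter_mset (\<lambda>y. y < z) (add_mset x M)) + 1"
      proof cases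
        case 1 then show ?thesis using cx f2 by simp
      next
        case 2 then show ?thesis using a f1[OF 2] unfolding Cm_def by simp
      qed
    qed
  qed
qed

lemma Cm_interval: "Cm M \<Longrightarrow> \<bar>z\<bar> \<le> int (sum_mset M) \<Longrightarrow> z \<in> repsM M"
proof (induction M arbitrary: z rule: multiset_induct_max)
  case empty then show ?case by simp
next
  case (add x M)
  have cm: "Cm M" and xle: "x \<le> 2 * sum_mset M + 1" using Cm_add[OF add.hyps] add.prems by auto
  define S where "S = int (sum_mset M)"
  have zb: "\<bar>z\<bar> \<le> S + int x" using add.prems(2) by (simp add: S_def)
  have xs: "int x \<le> 2 * S + 1" using xle by (simp add: S_def)
  consider "\<bar>z\<bar> \<le> S" | "z > S" | "z < - S" by linarith
  then show ?case
  proof cases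
    case 1
    then have "z \<in> repsM M" using add.IH cm S_def by blast
    then have "z + 0 * int x \<in> repsM (add_mset x M)" unfolding repsM_add_mset by blast
    then show ?thesis by simp
  next
    case 2
    then have "z - int x \<in> repsM M" using add.IH[OF cm] S_def zb xs by simp
    then have "(z - int x) + 1 * int x \<in> repsM (add_mset x M)" unfolding repsM_add_mset by blast
    then show ?thesis by simp
  next
    case 3
    then have "z + int x \<in> repsM M" using add.IH[OF cm] S_def zb xs by simp
    then have "(z + int x) + (-1) * int x \<in> repsM (add_mset x M)" unfolding repsM_add_mset by blast
    then show ?thesis by simp
  qed
qed

lemma top_reps:
  assumes "\<forall>y\<in>#L. x \<le> y"
  shows "a \<in> repsM L \<Longrightarrow> a = int (sum_mset L) \<or> a + int x \<le> int (sum_mset L)"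
  using assms
proof (induction L arbitrary: a)
  case empty then show ?case by simp
next
  case (add w L)
  then obtain b e where be: "a = b + e * int w" "b \<in> repsM L" "e \<in> {-1,0,1}"
    by (auto simp: repsM_add_mset)
  have ih: "b = int (sum_mset L) \<or> b + int x \<le> int (sum_mset L)" using add be by auto
  have bb: "\<bar>b\<bar> \<le> int (sum_mset L)" using repsM_bound be by blast
  have xw: "x \<le> w" using add.prems by auto
  show ?case using be ih bb xw by auto
qed

lemma reps_char:
  assumes pos: "\<forall>x\<in>#M. 0 < x"
  shows "(\<forall>l\<in>{1..sum_mset M}. int l \<in> repsM M) \<longleftrightarrow> Cm M"
proof
  assume "Cm M"
  then show "\<forall>l\<in>{1..sum_mset M}. int l \<in> repsM M" using Cm_interval[of M] by simp
next
  assume all: "\<forall>l\<in>{1..sum_mset M}. int l \<in> repsM M"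
  show "Cm M"
  proof (rule ccontr)
    assume "\<not> Cm M"
    then obtain x where xM: "x \<in># M" and big: "x > 2 * sum_mset (filter_mset (\<lambda>y. y < x) M) + 1"
      unfolding Cm_def by auto
    define T where "T = filter_mset (\<lambda>y. y < x) M"
    define L where "L = filter_mset (\<lambda>y. \<not> y < x) M"
    have M: "M = L + T" unfolding L_def T_def by (metis add.commute multiset_partition)
    have Lge: "\<forall>y\<in>#L. x \<le> y" unfolding L_def by auto
    have xL: "x \<in># L" unfolding L_def using xM by auto
    have sL: "x \<le> sum_mset L" using xL by (metis le_add1 multi_member_split sum_mset.add_mset)
    define l where "l = sum_mset L - sum_mset T - 1"
    have big': "x > 2 * sum_mset T + 1" using big T_def by simp
    have l1: "l \<in> {1..sum_mset M}" unfolding l_def using M sL big' by auto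
    then have "int l \<in> msum (repsM L) (repsM T)" using all M repsM_plus by metis
    then obtain a b where ab: "int l = a + b" "a \<in> repsM L" "b \<in> repsM T" by (auto simp: msum_def)
    have bb: "\<bar>b\<bar> \<le> int (sum_mset T)" using repsM_bound ab by blast
    have "a = int (sum_mset L) \<or> a + int x \<le> int (sum_mset L)" using top_reps[OF Lge ab(2)] .
    moreover have "int l = int (sum_mset L) - int (sum_mset T) - 1" using sL big' unfolding l_def by simp
    ultimately show False using ab bb big' by auto
  qed
qed

lemma weighing_iff:
  "weighing_partition n M \<longleftrightarrow> (\<forall>x\<in>#M. 0 < x) \<and> sum_mset M = n \<and> Cm M"
proof -
  have e: "(\<exists>ws. mset ws = M \<and>
        (\<forall>l\<in>{1..n}. \<exists>u::int list. length u = length ws \<and> set u \<subseteq> {-1, 0, 1} \<and>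
              int l = (\<Sum>j<length ws. u ! j * int (ws ! j)))) \<longleftrightarrow> (\<forall>l\<in>{1..n}. int l \<in> repsM M)"
  proof
    assume "\<exists>ws. mset ws = M \<and>
        (\<forall>l\<in>{1..n}. \<exists>u::int list. length u = length ws \<and> set u \<subseteq> {-1, 0, 1} \<and>
              int l = (\<Sum>j<length ws. u ! j * int (ws ! j)))"
    then obtain ws where "mset ws = M" "\<forall>l\<in>{1..n}. int l \<in> reps ws" using rep_iff by blast
    then show "\<forall>l\<in>{1..n}. int l \<in> repsM M" using repsM_mset by blast
  next
    assume a: "\<forall>l\<in>{1..n}. int l \<in> repsM M"
    obtain ws where ws: "mset ws = M" using ex_mset by blast
    then have "\<forall>l\<in>{1..n}. int l \<in> reps ws" using a repsM_mset by blast
    then show "\<exists>ws. mset ws = M \<and>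
        (\<forall>l\<in>{1..n}. \<exists>u::int list. length u = length ws \<and> set u \<subseteq> {-1, 0, 1} \<and>
              int l = (\<Sum>j<length ws. u ! j * int (ws ! j)))" using ws rep_iff by blast
  qed
  show ?thesis unfolding weighing_partition_def e using reps_char by blast
qed



lemma Cm_bound: "Cm M \<Longrightarrow> 2 * sum_mset M + 1 \<le> 3 ^ size M"
proof (induction M rule: multiset_induct_max)
  case empty then show ?case by simp
next
  case (add x M)
  have "Cm M" "x \<le> 2 * sum_mset M + 1" using Cm_add[OF add.hyps] add.prems by auto
  then show ?case using add.IH by simp
qed

lemma Cm_filter: "Cm M \<Longrightarrow> Cm (filter_mset (\<lambda>y. y < x) M)"
  unfolding Cm_def
proof
  fix z assume c: "\<forall>x\<in>#M. x \<le> 2 * sum_mset (filter_mset (\<lambda>y. y < x) M) + 1"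
    and z: "z \<in># filter_mset (\<lambda>y. y < x) M"
  have "filter_mset (\<lambda>y. y < z) (filter_mset (\<lambda>y. y < x) M) = filter_mset (\<lambda>y. y < z) M"
  proof -
    have zx: "z < x" using z by simp
    have "filter_mset (\<lambda>y. y < z) (filter_mset (\<lambda>y. y < x) M) = filter_mset (\<lambda>y. y < x \<and> y < z) M"
      by (simp add: filter_filter_mset)
    also have "\<dots> = filter_mset (\<lambda>y. y < z) M" using zx by (intro filter_mset_cong) auto
    finally show ?thesis .
  qed
  then show "z \<le> 2 * sum_mset (filter_mset (\<lambda>y. y < z) (filter_mset (\<lambda>y. y < x) M)) + 1"
    using c z by auto
qed

lemma Cm_part_bound:
  assumes "Cm M" "y \<in># M"
  shows "y \<le> 3 ^ (size M - 1)"
proof -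
  let ?F = "filter_mset (\<lambda>z. z < y) M"
  have "y \<le> 2 * sum_mset ?F + 1" using assms unfolding Cm_def by blast
  also have "\<dots> \<le> 3 ^ size ?F" using Cm_bound[OF Cm_filter[OF assms(1)]] .
  also have "size ?F \<le> size M - 1"
  proof -
    have "?F \<subseteq># M - {#y#}"
      using assms(2) by (metis filter_mset_add_mset insert_DiffM less_irrefl multiset_filter_subset)
    then have "size ?F \<le> size (M - {#y#})" by (rule size_mset_mono)
    then show ?thesis using assms(2) by (simp add: size_Diff_singleton)
  qed
  then have "3 ^ size ?F \<le> (3::nat) ^ (size M - 1)" by (rule power_increasing) simp
  finally show ?thesis .
qed

lemma interval_ext:
  assumes "\<forall>z. \<bar>z\<bar> \<le> int S \<longrightarrow> z \<in> repsM M" "d \<le> 2 * S + 1"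
  shows "\<forall>z. \<bar>z\<bar> \<le> int S + int d \<longrightarrow> z \<in> repsM (add_mset d M)"
proof (intro allI impI)
  fix z assume zb: "\<bar>z\<bar> \<le> int S + int d"
  have xs: "int d \<le> 2 * int S + 1" using assms(2) by linarith
  consider "\<bar>z\<bar> \<le> int S" | "z > int S" | "z < - int S" by linarith
  then show "z \<in> repsM (add_mset d M)"
  proof cases
    case 1
    then have "z \<in> repsM M" using assms(1) by blast
    then have "z + 0 * int d \<in> repsM (add_mset d M)" unfolding repsM_add_mset by blast
    then show ?thesis by simp
  next
    case 2
    then have "z - int d \<in> repsM M" using assms(1) zb xs by simp
    then have "(z - int d) + 1 * int d \<in> repsM (add_mset d M)" unfolding repsM_add_mset by blast
    then show ?thesis by simp
  next
    case 3
    then have "z + int d \<in> repsM M" using assms(1) zb xs by simp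
    then have "(z + int d) + (-1) * int d \<in> repsM (add_mset d M)" unfolding repsM_add_mset by blast
    then show ?thesis by simp
  qed
qed

lemma exists_small:
  "2 * n + 1 \<le> 3 ^ k \<Longrightarrow> \<exists>M. (\<forall>x\<in>#M. 0 < x) \<and> sum_mset M = n \<and> size M \<le> k \<and>
      (\<forall>z. \<bar>z\<bar> \<le> int n \<longrightarrow> z \<in> repsM M)"
proof (induction k arbitrary: n)
  case 0
  then have "n = 0" by simp
  then show ?case by (intro exI[of _ "{#}"]) auto
next
  case (Suc k)
  show ?case
  proof (cases "2 * n + 1 \<le> 3 ^ k")
    case True
    then obtain M where "(\<forall>x\<in>#M. 0 < x) \<and> sum_mset M = n \<and> size M \<le> k \<and>
      (\<forall>z. \<bar>z\<bar> \<le> int n \<longrightarrow> z \<in> repsM M)" using Suc.IH by blast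
    then show ?thesis by (intro exI[of _ M]) auto
  next
    case False
    define P where "P = (3::nat) ^ k"
    have oddP: "odd P" unfolding P_def by simp
    have h1: "2 * n + 1 \<le> 3 * P" using Suc.prems P_def by simp
    have h2: "\<not> 2 * n + 1 \<le> P" using False P_def by simp
    define s where "s = (n + 1) div 3"
    define d where "d = n - s"
    obtain p where p: "P = 2 * p + 1" using oddP by (metis oddE)
    have sd: "3 * s \<le> n + 1" "n + 1 < 3 * s + 3" unfolding s_def by linarith+
    have "6 * s \<le> 6 * p + 4" using sd h1 p by linarith
    then have "s \<le> p" by linarith
    then have s1: "2 * s + 1 \<le> P" using p by linarith
    have np: "n > p" using h2 p by linarith
    have s2: "d \<le> 2 * s + 1" "0 < d" "s + d = n" using sd np unfolding d_def by linarith+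
    obtain M where M: "\<forall>x\<in>#M. 0 < x" "sum_mset M = s" "size M \<le> k"
      "\<forall>z. \<bar>z\<bar> \<le> int s \<longrightarrow> z \<in> repsM M" using Suc.IH[of s] s1 P_def by blast
    have "\<forall>z. \<bar>z\<bar> \<le> int s + int d \<longrightarrow> z \<in> repsM (add_mset d M)"
      using interval_ext[OF M(4) s2(1)] .
    then show ?thesis using M s2 by (intro exI[of _ "add_mset d M"]) auto
  qed
qed

lemma weighing_bound: "weighing_partition n M \<Longrightarrow> 2 * n + 1 \<le> 3 ^ size M"
  using Cm_bound weighing_iff by metis

lemma exists_weighing: "2 * n + 1 \<le> 3 ^ k \<Longrightarrow> \<exists>M. weighing_partition n M \<and> size M \<le> k"
proof -
  assume "2 * n + 1 \<le> 3 ^ k"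
  then obtain M where M: "\<forall>x\<in>#M. 0 < x" "sum_mset M = n" "size M \<le> k"
      "\<forall>z. \<bar>z\<bar> \<le> int n \<longrightarrow> z \<in> repsM M" using exists_small by blast
  have "Cm M" using reps_char[OF M(1)] M(2,4) by auto
  then show ?thesis using M weighing_iff by blast
qed

definition W :: "nat \<Rightarrow> nat \<Rightarrow> nat multiset set" where
  "W n k = {M. weighing_partition n M \<and> size M = k}"

lemma feasible_iff:
  assumes "2 * n + 1 \<le> 3 ^ m" "m = 0 \<or> 3 ^ (m - 1) < 2 * n + 1"
  shows "feasible_partition n M \<longleftrightarrow> M \<in> W n m"
proof -
  have lower: "m \<le> size M'" if "weighing_partition n M'" for M'
  proof (rule ccontr)
    assume "\<not> m \<le> size M'"
    then have "size M' \<le> m - 1" "m \<noteq> 0" by auto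
    then have "(3::nat) ^ size M' \<le> 3 ^ (m - 1)" by (intro power_increasing) auto
    then show False using weighing_bound[OF that] assms(2) \<open>m \<noteq> 0\<close> by linarith
  qed
  obtain M0 where M0: "weighing_partition n M0" "size M0 \<le> m" using exists_weighing assms(1) by blast
  show ?thesis unfolding feasible_partition_def W_def
    using lower M0 by (metis (mono_tags, lifting) le_antisym mem_Collect_eq)
qed

lemma t_W:
  assumes "2 * n + 1 \<le> 3 ^ m" "m = 0 \<or> 3 ^ (m - 1) < 2 * n + 1"
  shows "t n = card (W n m)"
proof (cases "n = 0")
  case True
  then have m0: "m = 0" using assms(2) by auto
  have "W n m = {{#}}" unfolding W_def using True m0 by (auto simp: weighing_iff Cm_def)
  then show ?thesis using True by (simp add: t_def)
next
  case False
  have "{M. feasible_partition n M} = W n m" using feasible_iff[OF assms] by blast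
  then show ?thesis unfolding t_def using False by simp
qed



definition G :: "nat \<Rightarrow> nat \<Rightarrow> nat \<Rightarrow> nat" where
  "G n k b = card {M \<in> W n k. \<forall>x\<in>#M. x \<le> b}"

lemma part_le_sum: "x \<in># M \<Longrightarrow> x \<le> sum_mset (M::nat multiset)"
  by (metis le_add1 multi_member_split sum_mset.add_mset)

lemma finite_W: "finite (W n k)"
proof -
  have "W n k \<subseteq> mset ` {xs. set xs \<subseteq> {0..n} \<and> length xs = k}"
  proof
    fix M assume "M \<in> W n k"
    then have M: "sum_mset M = n" "size M = k" unfolding W_def by (auto simp: weighing_iff)
    obtain xs where xs: "mset xs = M" using ex_mset by blast
    have "set xs \<subseteq> {0..n}" using xs M part_le_sum by fastforce
    moreover have "length xs = k" using xs M by auto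
    ultimately show "M \<in> mset ` {xs. set xs \<subseteq> {0..n} \<and> length xs = k}" using xs by blast
  qed
  then show ?thesis by (rule finite_subset) (intro finite_imageI finite_lists_length_eq, simp)
qed

lemma G_0: "G n 0 b = (if n = 0 then 1 else 0)"
proof -
  have "{M \<in> W n 0. \<forall>x\<in>#M. x \<le> b} = (if n = 0 then {{#}} else {})"
    unfolding W_def by (auto simp: weighing_iff Cm_def)
  then show ?thesis unfolding G_def by simp
qed

lemma G_rec: "G n (Suc k) b = (\<Sum>R | R < n \<and> n \<le> 3 * R + 1 \<and> n - R \<le> b. G R k (n - R))"
proof -
  define I where "I = {R. R < n \<and> n \<le> 3 * R + 1 \<and> n - R \<le> b}"
  define A where "A R = {M' \<in> W R k. \<forall>x\<in>#M'. x \<le> n - R}" for R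
  have eq: "{M \<in> W n (Suc k). \<forall>x\<in>#M. x \<le> b} = (\<Union>R\<in>I. add_mset (n - R) ` A R)"
  proof (rule set_eqI, rule iffI)
    fix M assume "M \<in> {M \<in> W n (Suc k). \<forall>x\<in>#M. x \<le> b}"
    then have M: "\<forall>x\<in>#M. 0 < x" "sum_mset M = n" "Cm M" "size M = Suc k" "\<forall>x\<in>#M. x \<le> b"
      unfolding W_def by (auto simp: weighing_iff)
    then have ne: "M \<noteq> {#}" by auto
    define d where "d = Max (set_mset M)"
    have dM: "d \<in># M" unfolding d_def using ne by (simp add: Max_in)
    define M' where "M' = M - {#d#}"
    have Mdec: "M = add_mset d M'" unfolding M'_def using dM by simp
    have le: "\<forall>y\<in>#M'. y \<le> d" unfolding d_def M'_def by (meson Max_ge finite_set_mset in_diffD)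
    have c: "Cm M'" "d \<le> 2 * sum_mset M' + 1" using Cm_add[OF le] M(3) Mdec by auto
    define R where "R = sum_mset M'"
    have nR: "n = d + R" using M(2) Mdec R_def by simp
    have dpos: "0 < d" using M(1) dM by auto
    have RI: "R \<in> I" unfolding I_def using nR dpos c R_def M(5) dM by auto
    have "M' \<in> A R" unfolding A_def W_def weighing_iff using M Mdec c R_def le nR by auto
    moreover have "M = add_mset (n - R) M'" using Mdec nR by simp
    ultimately show "M \<in> (\<Union>R\<in>I. add_mset (n - R) ` A R)" using RI by blast
  next
    fix M assume "M \<in> (\<Union>R\<in>I. add_mset (n - R) ` A R)"
    then obtain R M' where R: "R \<in> I" "M' \<in> A R" "M = add_mset (n - R) M'" by blast
    have M': "\<forall>x\<in>#M'. 0 < x" "sum_mset M' = R" "Cm M'" "size M' = k" "\<forall>x\<in>#M'. x \<le> n - R"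
      using R(2) unfolding A_def W_def by (auto simp: weighing_iff)
    have RR: "R < n" "n \<le> 3 * R + 1" "n - R \<le> b" using R(1) unfolding I_def by auto
    have "Cm M" using Cm_add[OF M'(5)] M' RR R(3) by auto
    then show "M \<in> {M \<in> W n (Suc k). \<forall>x\<in>#M. x \<le> b}"
      unfolding W_def weighing_iff using M' RR R(3) by auto
  qed
  have fin: "finite I" unfolding I_def by auto
  have finA: "finite (A R)" for R unfolding A_def using finite_W by auto
  have disj: "add_mset (n - R1) ` A R1 \<inter> add_mset (n - R2) ` A R2 = {}"
    if "R1 \<in> I" "R2 \<in> I" "R1 \<noteq> R2" for R1 R2
  proof (rule ccontr)
    assume "add_mset (n - R1) ` A R1 \<inter> add_mset (n - R2) ` A R2 \<noteq> {}"
    then obtain M1 M2 where M12: "M1 \<in> A R1" "M2 \<in> A R2" "add_mset (n - R1) M1 = add_mset (n - R2) M2"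
      by blast
    have a1: "\<forall>x\<in>#M1. x \<le> n - R1" and a2: "\<forall>x\<in>#M2. x \<le> n - R2" using M12 unfolding A_def by auto
    have "n - R1 \<in># add_mset (n - R2) M2" using M12(3) by (metis union_single_eq_member)
    then have "n - R1 \<le> n - R2" using a2 by auto
    moreover have "n - R2 \<in># add_mset (n - R1) M1" using M12(3) by (metis union_single_eq_member)
    then have "n - R2 \<le> n - R1" using a1 by auto
    ultimately show False using that unfolding I_def by auto
  qed
  have "G n (Suc k) b = card (\<Union>R\<in>I. add_mset (n - R) ` A R)" unfolding G_def eq ..
  also have "\<dots> = (\<Sum>R\<in>I. card (add_mset (n - R) ` A R))"
    by (rule card_UN_disjoint) (use fin finA disj in auto)
  also have "\<dots> = (\<Sum>R\<in>I. card (A R))"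
    by (intro sum.cong refl card_image) (auto simp: inj_on_def)
  finally show ?thesis unfolding I_def A_def G_def by simp
qed

lemma G_zero: "3 ^ k < 2 * n + 1 \<Longrightarrow> G n k b = 0"
proof -
  assume a: "3 ^ k < 2 * n + 1"
  have "W n k = {}" unfolding W_def using weighing_bound a by fastforce
  then show ?thesis unfolding G_def by simp
qed

lemma G_full: "(0 < k \<and> 3 ^ (k - 1) \<le> b) \<or> n \<le> b \<Longrightarrow> G n k b = card (W n k)"
proof -
  assume a: "(0 < k \<and> 3 ^ (k - 1) \<le> b) \<or> n \<le> b"
  have "\<forall>x\<in>#M. x \<le> b" if "M \<in> W n k" for M
  proof
    fix x assume x: "x \<in># M"
    have M: "sum_mset M = n" "Cm M" "size M = k" using that unfolding W_def by (auto simp: weighing_iff)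
    have "x \<le> n" using part_le_sum x M by blast
    moreover have "x \<le> 3 ^ (k - 1)" using Cm_part_bound[OF M(2) x] M by simp
    ultimately show "x \<le> b" using a by auto
  qed
  then have "{M \<in> W n k. \<forall>x\<in>#M. x \<le> b} = W n k" by blast
  then show ?thesis unfolding G_def by simp
qed

lemma t_G:
  assumes "2 * n + 1 \<le> 3 ^ m" "m = 0 \<or> 3 ^ (m - 1) < 2 * n + 1"
  shows "t n = G n m n"
  using t_W[OF assms] G_full[of m n n] by simp



lemma partA_R:
  fixes k n R :: nat
  defines "P \<equiv> (3::nat) ^ k"
  assumes n1: "3 * P + 1 \<le> 2 * n" and n2: "2 * n \<le> 5 * P + 1"
    and R1: "n \<le> 3 * R + 1" and R2: "4 * R + 1 \<le> 2 * n + P"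
  shows "t R = G R (Suc k) (n - R) + (\<Sum>S | R \<le> 3 * S + 1 \<and> S + n + 1 \<le> 2 * R. t S)"
proof -
  have oddP: "odd P" unfolding P_def by simp
  obtain p where p: "P = 2 * p + 1" using oddP by (metis oddE)
  have "2 * R \<le> 6 * p + 3" using n2 R2 p by linarith
  then have "2 * R + 1 \<le> 3 * P" using p by presburger
  then have a1: "2 * R + 1 \<le> 3 ^ Suc k" by (simp add: P_def)
  have "3 * P \<le> 6 * R + 1" using n1 R1 by linarith
  then have "P < 2 * R + 1" by presburger
  then have a2: "3 ^ (Suc k - 1) < 2 * R + 1" by (simp add: P_def)
  have Rn: "R < n" using n1 n2 R1 R2 by linarith
  define J where "J = {S. S < R \<and> R \<le> 3 * S + 1}"
  define C where "C = {S. R \<le> 3 * S + 1 \<and> S + n + 1 \<le> 2 * R}"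
  have finJ: "finite J" unfolding J_def by auto
  have "t R = G R (Suc k) R" using t_G[OF a1] a2 by simp
  also have "\<dots> = (\<Sum>S\<in>J. G S k (R - S))" unfolding G_rec J_def by (intro sum.cong) auto
  also have "\<dots> = (\<Sum>S\<in>{S\<in>J. R - S \<le> n - R}. G S k (R - S)) + (\<Sum>S\<in>C. G S k (R - S))"
  proof -
    have "J = {S\<in>J. R - S \<le> n - R} \<union> C" "{S\<in>J. R - S \<le> n - R} \<inter> C = {}"
      unfolding J_def C_def using Rn by auto
    then show ?thesis using finJ by (metis (no_types, lifting) finite_Un sum.union_disjoint)
  qed
  also have "(\<Sum>S\<in>{S\<in>J. R - S \<le> n - R}. G S k (R - S)) = G R (Suc k) (n - R)"
    unfolding G_rec J_def by (intro sum.cong) auto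
  also have "(\<Sum>S\<in>C. G S k (R - S)) = (\<Sum>S\<in>C. t S)"
  proof (intro sum.cong refl)
    fix S assume S: "S \<in> C"
    show "G S k (R - S) = t S"
    proof (cases k)
      case 0
      then have "P = 1" unfolding P_def by simp
      then show ?thesis using S R2 unfolding C_def by simp
    next
      case (Suc j)
      define Q where "Q = (3::nat) ^ j"
      have PQ: "P = 3 * Q" unfolding P_def Q_def Suc by simp
      have oddQ: "odd Q" unfolding Q_def by simp
      have S1: "R \<le> 3 * S + 1" "S + n + 1 \<le> 2 * R" using S unfolding C_def by auto
      have "2 * S + 1 \<le> P" using S1 R2 by linarith
      then have b1: "2 * S + 1 \<le> 3 ^ k" by (simp add: P_def)
      have "9 * Q \<le> 18 * S + 7" using S1 n1 R1 PQ by linarith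
      then have "Q < 2 * S + 1" by presburger
      then have b2: "3 ^ (k - 1) < 2 * S + 1" by (simp add: Suc Q_def)
      have "Q + S \<le> R" using S1 n1 R2 PQ by linarith
      then have b3: "3 ^ (k - 1) \<le> R - S" by (simp add: Suc Q_def)
      have "G S k (R - S) = card (W S k)" using G_full[of k "R - S" S] b3 Suc by simp
      also have "\<dots> = t S" using t_W[OF b1] b2 by simp
      finally show ?thesis .
    qed
  qed
  finally show ?thesis unfolding C_def by simp
qed

lemma partA:
  fixes k n :: nat
  defines "P \<equiv> (3::nat) ^ k"
  assumes n1: "3 * P + 1 \<le> 2 * n" and n2: "2 * n \<le> 5 * P + 1"
  shows "(\<Sum>R | n \<le> 3 * R + 1 \<and> 4 * R + 1 \<le> 2 * n + P. t R) =
         t n + (\<Sum>R | n \<le> 3 * R + 1 \<and> 4 * R + 1 \<le> 2 * n + P \<and> 3 * n + 2 \<le> 5 * R.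
                   \<Sum>S | R \<le> 3 * S + 1 \<and> S + n + 1 \<le> 2 * R. t S)"
proof -
  define A where "A = {R. n \<le> 3 * R + 1 \<and> 4 * R + 1 \<le> 2 * n + P}"
  define B where "B = {R. n \<le> 3 * R + 1 \<and> 4 * R + 1 \<le> 2 * n + P \<and> 3 * n + 2 \<le> 5 * R}"
  define I where "I = {R. R < n \<and> n \<le> 3 * R + 1 \<and> n - R \<le> n}"
  define C where "C R = {S. R \<le> 3 * S + 1 \<and> S + n + 1 \<le> 2 * R}" for R
  have finI: "finite I" unfolding I_def by auto
  have finA: "finite A" unfolding A_def by (rule finite_subset[of _ "{..2 * n + P}"]) auto
  have finC: "finite (C R)" for R unfolding C_def by (rule finite_subset[of _ "{..2 * R}"]) auto
  have AI: "A \<subseteq> I" unfolding A_def I_def using n1 by auto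
  have BA: "B \<subseteq> A" unfolding A_def B_def by auto
  have P1: "1 \<le> P" unfolding P_def by simp
  have m1: "2 * n + 1 \<le> 3 ^ Suc (Suc k)" using n2 P1 by (simp add: P_def[symmetric])
  have m2: "3 ^ (Suc (Suc k) - 1) < 2 * n + 1" using n1 by (simp add: P_def[symmetric])
  have "t n = G n (Suc (Suc k)) n" using t_G[OF m1] m2 by simp
  also have "\<dots> = (\<Sum>R\<in>I. G R (Suc k) (n - R))" unfolding G_rec I_def ..
  also have "\<dots> = (\<Sum>R\<in>A. G R (Suc k) (n - R))"
  proof (rule sum.mono_neutral_right[OF finI AI], rule ballI)
    fix R assume R: "R \<in> I - A"
    have R1: "R < n" "n \<le> 3 * R + 1" "2 * n + P < 4 * R + 1" using R unfolding I_def A_def by auto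
    show "G R (Suc k) (n - R) = 0" unfolding G_rec
    proof (rule sum.neutral, rule ballI)
      fix S assume "S \<in> {S. S < R \<and> R \<le> 3 * S + 1 \<and> R - S \<le> n - R}"
      then have S: "S < R" "R - S \<le> n - R" by auto
      then have "2 * R \<le> S + n" using R1 by arith
      then have "3 ^ k < 2 * S + 1" using R1 by (simp add: P_def[symmetric])
      then show "G S k (R - S) = 0" by (rule G_zero)
    qed
  qed
  finally have tn: "t n = (\<Sum>R\<in>A. G R (Suc k) (n - R))" .
  have "(\<Sum>R\<in>A. t R) = (\<Sum>R\<in>A. G R (Suc k) (n - R) + (\<Sum>S\<in>C R. t S))"
  proof (rule sum.cong[OF refl])
    fix R assume "R \<in> A"
    then have "n \<le> 3 * R + 1" "4 * R + 1 \<le> 2 * n + P" unfolding A_def by auto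
    then show "t R = G R (Suc k) (n - R) + (\<Sum>S\<in>C R. t S)"
      using partA_R[of k n R] n1 n2 unfolding P_def C_def by simp
  qed
  also have "\<dots> = t n + (\<Sum>R\<in>A. \<Sum>S\<in>C R. t S)" using tn by (simp add: sum.distrib)
  also have "(\<Sum>R\<in>A. \<Sum>S\<in>C R. t S) = (\<Sum>R\<in>B. \<Sum>S\<in>C R. t S)"
  proof (rule sum.mono_neutral_right[OF finA BA], rule ballI)
    fix R assume R: "R \<in> A - B"
    have "C R = {}"
    proof (rule ccontr)
      assume "C R \<noteq> {}"
      then obtain S where "R \<le> 3 * S + 1" "S + n + 1 \<le> 2 * R" unfolding C_def by auto
      then show False using R unfolding A_def B_def by auto
    qed
    then show "(\<Sum>S\<in>C R. t S) = 0" by simp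
  qed
  finally show ?thesis unfolding A_def B_def C_def by simp
qed

lemma partB:
  fixes k n :: nat
  defines "P \<equiv> (3::nat) ^ k"
  assumes n1: "5 * P + 3 \<le> 2 * n" and n2: "2 * n + 1 \<le> 9 * P"
  shows "t n = (\<Sum>R | n \<le> 3 * R + 1 \<and> 2 * R + 1 \<le> 3 * P. t R)"
proof -
  define D where "D = {R. n \<le> 3 * R + 1 \<and> 2 * R + 1 \<le> 3 * P}"
  define I where "I = {R. R < n \<and> n \<le> 3 * R + 1 \<and> n - R \<le> n}"
  have finI: "finite I" unfolding I_def by auto
  have DI: "D \<subseteq> I" unfolding D_def I_def using n1 by auto
  have m1: "2 * n + 1 \<le> 3 ^ Suc (Suc k)" using n2 by (simp add: P_def[symmetric])
  have m2: "3 ^ (Suc (Suc k) - 1) < 2 * n + 1" using n1 by (simp add: P_def[symmetric])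
  have "t n = G n (Suc (Suc k)) n" using t_G[OF m1] m2 by simp
  also have "\<dots> = (\<Sum>R\<in>I. G R (Suc k) (n - R))" unfolding G_rec I_def ..
  also have "\<dots> = (\<Sum>R\<in>D. G R (Suc k) (n - R))"
  proof (rule sum.mono_neutral_right[OF finI DI], rule ballI)
    fix R assume R: "R \<in> I - D"
    then have "3 ^ Suc k < 2 * R + 1" unfolding I_def D_def by (auto simp: P_def)
    then show "G R (Suc k) (n - R) = 0" by (rule G_zero)
  qed
  also have "\<dots> = (\<Sum>R\<in>D. t R)"
  proof (rule sum.cong[OF refl])
    fix R assume "R \<in> D"
    then have R: "n \<le> 3 * R + 1" "2 * R + 1 \<le> 3 * P" unfolding D_def by auto
    have "P + R \<le> n" using R n1 by linarith
    then have "3 ^ k \<le> n - R" unfolding P_def by arith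
    then have "G R (Suc k) (n - R) = card (W R (Suc k))" using G_full[of "Suc k" "n - R" R]
      by (simp add: P_def)
    also have "\<dots> = t R"
    proof (rule t_W[symmetric])
      show "2 * R + 1 \<le> 3 ^ Suc k" using R by (simp add: P_def)
      have "P < 2 * R + 1" using R n1 by linarith
      then show "Suc k = 0 \<or> 3 ^ (Suc k - 1) < 2 * R + 1" by (simp add: P_def)
    qed
    finally show "G R (Suc k) (n - R) = t R" .
  qed
  finally show ?thesis unfolding D_def .
qed



lemma sum_int_image:
  assumes "\<And>x. x \<in> X \<longleftrightarrow> 0 \<le> x \<and> nat x \<in> A"
  shows "sum h X = (\<Sum>a\<in>A. h (int a))"
proof -
  have "X = int ` A"
  proof (rule set_eqI, rule iffI)
    fix x assume "x \<in> X"
    then have x: "0 \<le> x" "nat x \<in> A" using assms by blast+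
    then have "x = int (nat x)" by simp
    then show "x \<in> int ` A" using x(2) by (rule image_eqI)
  next
    fix x assume "x \<in> int ` A"
    then obtain a where a: "x = int a" "a \<in> A" by blast
    then show "x \<in> X" using assms[of "int a"] by simp
  qed
  moreover have "sum h (int ` A) = sum (h \<circ> int) A" by (rule sum.reindex) (simp add: inj_on_def)
  ultimately show ?thesis by simp
qed

lemma c_lo: "(real_of_int n - real_of_int c) / real_of_int d \<le> real_of_int x \<longleftrightarrow> n - c \<le> d * x"
  if "d > 0" for n c d x :: int
proof -
  have "(real_of_int n - real_of_int c) / real_of_int d \<le> real_of_int x \<longleftrightarrow>
        real_of_int (n - c) \<le> real_of_int (d * x)" using that by (simp add: field_simps)
  then show ?thesis by (simp only: of_int_le_iff)
qed

lemma c_hi: "real_of_int x \<le> (real_of_int a) / real_of_int d \<longleftrightarrow> d * x \<le> a"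
  if "d > 0" for a d x :: int
proof -
  have "real_of_int x \<le> (real_of_int a) / real_of_int d \<longleftrightarrow>
        real_of_int (d * x) \<le> real_of_int a" using that by (simp add: field_simps)
  then show ?thesis by (simp only: of_int_le_iff)
qed

lemma t1: "t 1 = 1"
proof -
  have "t 1 = G 1 1 1" using t_G[of 1 1] by simp
  also have "\<dots> = (\<Sum>R | R < 1 \<and> 1 \<le> 3 * R + 1 \<and> 1 - R \<le> 1. G R 0 (1 - R))"
    using G_rec[of 1 0 1] by simp
  also have "{R::nat. R < 1 \<and> 1 \<le> 3 * R + 1 \<and> 1 - R \<le> 1} = {0}" by auto
  finally show ?thesis by (simp add: G_0)
qed



lemma m1_case: "m = 1 \<Longrightarrow> (\<forall>n::int.
            ((3::real) ^ (m - 1) + 1) / 2 \<le> real_of_int n \<and>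
            real_of_int n \<le> ((3::real) ^ (m - 1) + 1) / 2 + (3::real) powi (int m - 2) \<longrightarrow>
            int (t (nat n)) =
              (\<Sum>R\<in>{\<lceil>(real_of_int n - 1) / 3\<rceil>..\<lfloor>(2 * real_of_int n + (3::real) powi (int m - 2) - 1) / 4\<rfloor>}.
                  int (t (nat R)))
              - (\<Sum>R\<in>{\<lceil>(3 * real_of_int n + 2) / 5\<rceil>..\<lfloor>(2 * real_of_int n + (3::real) powi (int m - 2) - 1) / 4\<rfloor>}.
                  \<Sum>S\<in>{\<lceil>(real_of_int R - 1) / 3\<rceil>..2 * R - n - 1}. int (t (nat S))))
       \<and> (\<forall>n::int.
            ((3::real) ^ (m - 1) + 1) / 2 + (3::real) powi (int m - 2) + 1 \<le> real_of_int n \<and>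
            real_of_int n \<le> ((3::real) ^ m - 1) / 2 \<longrightarrow>
            int (t (nat n)) =
              (\<Sum>R\<in>{\<lceil>(real_of_int n - 1) / 3\<rceil>..(3 ^ (m - 1) - 1) div 2}. int (t (nat R))))"
proof -
  assume m: "m = 1"
  have pw: "(3::real) powi (int m - 2) = 1 / 3" using m by (simp add: power_int_def)
  show ?thesis
  proof (intro conjI allI impI)
    fix n :: int
    assume h: "((3::real) ^ (m - 1) + 1) / 2 \<le> real_of_int n \<and>
            real_of_int n \<le> ((3::real) ^ (m - 1) + 1) / 2 + (3::real) powi (int m - 2)"
    have "1 \<le> real_of_int n" "real_of_int n \<le> 4 / 3" using h m pw by auto
    then have "real_of_int 1 \<le> real_of_int n" "real_of_int n < real_of_int 2" by auto
    then have "1 \<le> n" "n < 2" by (simp only: of_int_le_iff of_int_less_iff)+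
    then have n1: "n = 1" by simp
    have fl: "\<lfloor>(2 * real_of_int n + (3::real) powi (int m - 2) - 1) / 4\<rfloor> = 0"
      using n1 pw by (simp add: floor_eq_iff)
    have c1: "\<lceil>(real_of_int n - 1) / 3\<rceil> = 0" using n1 by simp
    have c2: "\<lceil>(3 * real_of_int n + 2) / 5\<rceil> = 1" using n1 by simp
    show "int (t (nat n)) =
              (\<Sum>R\<in>{\<lceil>(real_of_int n - 1) / 3\<rceil>..\<lfloor>(2 * real_of_int n + (3::real) powi (int m - 2) - 1) / 4\<rfloor>}.
                  int (t (nat R)))
              - (\<Sum>R\<in>{\<lceil>(3 * real_of_int n + 2) / 5\<rceil>..\<lfloor>(2 * real_of_int n + (3::real) powi (int m - 2) - 1) / 4\<rfloor>}.
                  \<Sum>S\<in>{\<lceil>(real_of_int R - 1) / 3\<rceil>..2 * R - n - 1}. int (t (nat S)))"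
      unfolding fl c1 c2 using n1 t1 by (simp add: t_def)
  next
    fix n :: int
    assume h: "((3::real) ^ (m - 1) + 1) / 2 + (3::real) powi (int m - 2) + 1 \<le> real_of_int n \<and>
            real_of_int n \<le> ((3::real) ^ m - 1) / 2"
    have a: "7 / 3 \<le> real_of_int n" "real_of_int n \<le> 1" using h m pw by auto
    then have False by linarith
    then show "int (t (nat n)) =
              (\<Sum>R\<in>{\<lceil>(real_of_int n - 1) / 3\<rceil>..(3 ^ (m - 1) - 1) div 2}. int (t (nat R)))" ..
  qed
qed



lemma main_part1:
  assumes m: "m = Suc (Suc k)"
    and h: "((3::real) ^ (m - 1) + 1) / 2 \<le> real_of_int n \<and>
            real_of_int n \<le> ((3::real) ^ (m - 1) + 1) / 2 + (3::real) powi (int m - 2)"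
  shows "int (t (nat n)) =
              (\<Sum>R\<in>{\<lceil>(real_of_int n - 1) / 3\<rceil>..\<lfloor>(2 * real_of_int n + (3::real) powi (int m - 2) - 1) / 4\<rfloor>}.
                  int (t (nat R)))
              - (\<Sum>R\<in>{\<lceil>(3 * real_of_int n + 2) / 5\<rceil>..\<lfloor>(2 * real_of_int n + (3::real) powi (int m - 2) - 1) / 4\<rfloor>}.
                  \<Sum>S\<in>{\<lceil>(real_of_int R - 1) / 3\<rceil>..2 * R - n - 1}. int (t (nat S)))"
proof -
  define P where "P = (3::nat) ^ k"
  define p where "p = int P"
  have pw: "(3::real) powi (int m - 2) = real_of_int p"
  proof -
    have "int m - 2 = int k" using m by simp
    then show ?thesis by (simp add: p_def P_def)
  qed
  have e1: "(3::real) ^ (m - 1) = 3 * real_of_int p" using m by (simp add: p_def P_def)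
  have h1a: "3 * real_of_int p + 1 \<le> 2 * real_of_int n"
    using conjunct1[OF h[unfolded pw e1]] by (simp add: field_simps)
  have h1b: "2 * real_of_int n \<le> 5 * real_of_int p + 1"
    using conjunct2[OF h[unfolded pw e1]] by (simp add: field_simps)
  note h1 = h1a h1b
  have "real_of_int (3 * p + 1) \<le> real_of_int (2 * n)" "real_of_int (2 * n) \<le> real_of_int (5 * p + 1)"
    using h1 by simp_all
  then have h2: "3 * p + 1 \<le> 2 * n" "2 * n \<le> 5 * p + 1" by (simp only: of_int_le_iff)+
  define N where "N = nat n"
  have nN: "n = int N" using h2 p_def unfolding N_def by simp
  have NP: "3 * P + 1 \<le> 2 * N" "2 * N \<le> 5 * P + 1" using h2 nN p_def by linarith+
  have P1: "1 \<le> P" unfolding P_def by simp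
  note eqA = partA[of k N, folded P_def, OF NP]
  define A where "A = {R. N \<le> 3 * R + 1 \<and> 4 * R + 1 \<le> 2 * N + P}"
  define B where "B = {R. N \<le> 3 * R + 1 \<and> 4 * R + 1 \<le> 2 * N + P \<and> 3 * N + 2 \<le> 5 * R}"
  define C where "C R = {S. R \<le> 3 * S + 1 \<and> S + N + 1 \<le> 2 * R}" for R
  have i1: "(real_of_int a - 1) / 3 \<le> real_of_int x \<longleftrightarrow> a - 1 \<le> 3 * x" for a x
    using c_lo[of 3 a 1 x] by simp
  have i2: "real_of_int x \<le> (2 * real_of_int n + real_of_int p - 1) / 4 \<longleftrightarrow> 4 * x \<le> 2 * n + p - 1" for x
    using c_hi[of 4 x "2 * n + p - 1"] by simp
  have i3: "(3 * real_of_int n + 2) / 5 \<le> real_of_int x \<longleftrightarrow> 3 * n + 2 \<le> 5 * x" for x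
    using c_lo[of 5 "3 * n" "-2" x] by simp
  have sA: "x \<in> {\<lceil>(real_of_int n - 1) / 3\<rceil>..\<lfloor>(2 * real_of_int n + real_of_int p - 1) / 4\<rfloor>}
            \<longleftrightarrow> 0 \<le> x \<and> nat x \<in> A" for x
  proof -
    have "x \<in> {\<lceil>(real_of_int n - 1) / 3\<rceil>..\<lfloor>(2 * real_of_int n + real_of_int p - 1) / 4\<rfloor>}
          \<longleftrightarrow> n - 1 \<le> 3 * x \<and> 4 * x \<le> 2 * n + p - 1"
      by (simp only: atLeastAtMost_iff ceiling_le_iff le_floor_iff i1 i2)
    also have "\<dots> \<longleftrightarrow> 0 \<le> x \<and> nat x \<in> A"
      unfolding A_def using nN p_def h2 by auto
    finally show ?thesis .
  qed
  have sB: "x \<in> {\<lceil>(3 * real_of_int n + 2) / 5\<rceil>..\<lfloor>(2 * real_of_int n + real_of_int p - 1) / 4\<rfloor>}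
            \<longleftrightarrow> 0 \<le> x \<and> nat x \<in> B" for x
  proof -
    have "x \<in> {\<lceil>(3 * real_of_int n + 2) / 5\<rceil>..\<lfloor>(2 * real_of_int n + real_of_int p - 1) / 4\<rfloor>}
          \<longleftrightarrow> 3 * n + 2 \<le> 5 * x \<and> 4 * x \<le> 2 * n + p - 1"
      by (simp only: atLeastAtMost_iff ceiling_le_iff le_floor_iff i3 i2)
    also have "\<dots> \<longleftrightarrow> 0 \<le> x \<and> nat x \<in> B"
      unfolding B_def using nN p_def h2 by auto
    finally show ?thesis .
  qed
  have sC: "x \<in> {\<lceil>(real_of_int (int r) - 1) / 3\<rceil>..2 * int r - n - 1}
            \<longleftrightarrow> 0 \<le> x \<and> nat x \<in> C r" for x r
  proof -
    have "x \<in> {\<lceil>(real_of_int (int r) - 1) / 3\<rceil>..2 * int r - n - 1}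
          \<longleftrightarrow> int r - 1 \<le> 3 * x \<and> x \<le> 2 * int r - n - 1"
      by (simp only: atLeastAtMost_iff ceiling_le_iff i1)
    also have "\<dots> \<longleftrightarrow> 0 \<le> x \<and> nat x \<in> C r"
      unfolding C_def using nN by auto
    finally show ?thesis .
  qed
  have S1: "(\<Sum>R\<in>{\<lceil>(real_of_int n - 1) / 3\<rceil>..\<lfloor>(2 * real_of_int n + real_of_int p - 1) / 4\<rfloor>}.
                  int (t (nat R))) = int (\<Sum>R\<in>A. t R)"
    using sum_int_image[OF sA, of "\<lambda>R. int (t (nat R))"] by simp
  have S2: "(\<Sum>R\<in>{\<lceil>(3 * real_of_int n + 2) / 5\<rceil>..\<lfloor>(2 * real_of_int n + real_of_int p - 1) / 4\<rfloor>}.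
                  \<Sum>S\<in>{\<lceil>(real_of_int R - 1) / 3\<rceil>..2 * R - n - 1}. int (t (nat S)))
           = int (\<Sum>R\<in>B. \<Sum>S\<in>C R. t S)"
  proof -
    have "(\<Sum>R\<in>{\<lceil>(3 * real_of_int n + 2) / 5\<rceil>..\<lfloor>(2 * real_of_int n + real_of_int p - 1) / 4\<rfloor>}.
                  \<Sum>S\<in>{\<lceil>(real_of_int R - 1) / 3\<rceil>..2 * R - n - 1}. int (t (nat S)))
          = (\<Sum>r\<in>B. \<Sum>S\<in>{\<lceil>(real_of_int (int r) - 1) / 3\<rceil>..2 * int r - n - 1}. int (t (nat S)))"
      by (rule sum_int_image[OF sB])
    also have "\<dots> = (\<Sum>r\<in>B. \<Sum>S\<in>C r. int (t S))"
    proof (rule sum.cong[OF refl])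
      fix r assume "r \<in> B"
      show "(\<Sum>S\<in>{\<lceil>(real_of_int (int r) - 1) / 3\<rceil>..2 * int r - n - 1}. int (t (nat S))) = (\<Sum>S\<in>C r. int (t S))"
        using sum_int_image[OF sC[of _ r], where h = "\<lambda>S. int (t (nat S))"] by simp
    qed
    finally show ?thesis by simp
  qed
  have "int (t N) = int (\<Sum>R\<in>A. t R) - int (\<Sum>R\<in>B. \<Sum>S\<in>C R. t S)"
    using eqA unfolding A_def B_def C_def by simp
  then show ?thesis unfolding pw S1 S2 using nN by simp
qed

lemma main_part2:
  assumes m: "m = Suc (Suc k)"
    and h: "((3::real) ^ (m - 1) + 1) / 2 + (3::real) powi (int m - 2) + 1 \<le> real_of_int n \<and>
            real_of_int n \<le> ((3::real) ^ m - 1) / 2"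
  shows "int (t (nat n)) =
              (\<Sum>R\<in>{\<lceil>(real_of_int n - 1) / 3\<rceil>..(3 ^ (m - 1) - 1) div 2}. int (t (nat R)))"
proof -
  define P where "P = (3::nat) ^ k"
  define p where "p = int P"
  have pw: "(3::real) powi (int m - 2) = real_of_int p"
  proof -
    have "int m - 2 = int k" using m by simp
    then show ?thesis by (simp add: p_def P_def)
  qed
  have e1: "(3::real) ^ (m - 1) = 3 * real_of_int p" using m by (simp add: p_def P_def)
  have e2: "(3::real) ^ m = 9 * real_of_int p" using m by (simp add: p_def P_def)
  have e3: "(3::int) ^ (m - 1) = 3 * p" using m by (simp add: p_def P_def)
  have h1a: "5 * real_of_int p + 3 \<le> 2 * real_of_int n"
    using conjunct1[OF h[unfolded pw e1 e2]] by (simp add: field_simps)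
  have h1b: "2 * real_of_int n \<le> 9 * real_of_int p - 1"
    using conjunct2[OF h[unfolded pw e1 e2]] by (simp add: field_simps)
  have "real_of_int (5 * p + 3) \<le> real_of_int (2 * n)" "real_of_int (2 * n) \<le> real_of_int (9 * p - 1)"
    using h1a h1b by simp_all
  then have h2: "5 * p + 3 \<le> 2 * n" "2 * n \<le> 9 * p - 1" by (simp only: of_int_le_iff)+
  define N where "N = nat n"
  have nN: "n = int N" using h2 p_def unfolding N_def by simp
  have NP: "5 * P + 3 \<le> 2 * N" "2 * N + 1 \<le> 9 * P" using h2 nN p_def by linarith+
  note eqB = partB[of k N, folded P_def, OF NP]
  define D where "D = {R. N \<le> 3 * R + 1 \<and> 2 * R + 1 \<le> 3 * P}"
  have i1: "(real_of_int a - 1) / 3 \<le> real_of_int x \<longleftrightarrow> a - 1 \<le> 3 * x" for a x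
    using c_lo[of 3 a 1 x] by simp
  have dv: "x \<le> (3 * p - 1) div 2 \<longleftrightarrow> 2 * x \<le> 3 * p - 1" for x by presburger
  have sD: "x \<in> {\<lceil>(real_of_int n - 1) / 3\<rceil>..(3 * p - 1) div 2} \<longleftrightarrow> 0 \<le> x \<and> nat x \<in> D" for x
  proof -
    have "x \<in> {\<lceil>(real_of_int n - 1) / 3\<rceil>..(3 * p - 1) div 2}
          \<longleftrightarrow> n - 1 \<le> 3 * x \<and> 2 * x \<le> 3 * p - 1"
      by (simp only: atLeastAtMost_iff ceiling_le_iff i1 dv)
    also have "\<dots> \<longleftrightarrow> 0 \<le> x \<and> nat x \<in> D"
      unfolding D_def using nN p_def h2 by auto
    finally show ?thesis .
  qed
  have S1: "(\<Sum>R\<in>{\<lceil>(real_of_int n - 1) / 3\<rceil>..(3 * p - 1) div 2}. int (t (nat R))) = int (\<Sum>R\<in>D. t R)"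
    using sum_int_image[OF sD, where h = "\<lambda>R. int (t (nat R))"] by simp
  show ?thesis unfolding e3 S1 using eqB nN unfolding D_def by simp
qed


theorem theorem6:
  fixes m :: nat
  assumes "0 < m"
  shows "(\<forall>n::int.
            ((3::real) ^ (m - 1) + 1) / 2 \<le> real_of_int n \<and>
            real_of_int n \<le> ((3::real) ^ (m - 1) + 1) / 2 + (3::real) powi (int m - 2) \<longrightarrow>
            int (t (nat n)) =
              (\<Sum>R\<in>{\<lceil>(real_of_int n - 1) / 3\<rceil>..\<lfloor>(2 * real_of_int n + (3::real) powi (int m - 2) - 1) / 4\<rfloor>}.
                  int (t (nat R)))
              - (\<Sum>R\<in>{\<lceil>(3 * real_of_int n + 2) / 5\<rceil>..\<lfloor>(2 * real_of_int n + (3::real) powi (int m - 2) - 1) / 4\<rfloor>}.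
                  \<Sum>S\<in>{\<lceil>(real_of_int R - 1) / 3\<rceil>..2 * R - n - 1}. int (t (nat S))))
       \<and> (\<forall>n::int.
            ((3::real) ^ (m - 1) + 1) / 2 + (3::real) powi (int m - 2) + 1 \<le> real_of_int n \<and>
            real_of_int n \<le> ((3::real) ^ m - 1) / 2 \<longrightarrow>
            int (t (nat n)) =
              (\<Sum>R\<in>{\<lceil>(real_of_int n - 1) / 3\<rceil>..(3 ^ (m - 1) - 1) div 2}. int (t (nat R))))"
  proof (cases "m = 1")
  case True
  then show ?thesis using m1_case by blast
next
  case False
  then have "2 \<le> m" using assms by simp
  then have mk: "m = Suc (Suc (m - 2))" by simp
  show ?thesis using main_part1[OF mk] main_part2[OF mk] by blast
qed

end
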